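(* Let $\{S;\tilde w_1,\dots,\tilde w_N;p_1,\dots,p_N\}$ be a DIFS, and suppose that for some index $i$ the minimal absorbing set $\mathcal M[\tilde w_i,S]$ exists. Let $\mathcal A_k$ be a recurrent communication class of the associated Markov chain. If there is $\tilde x\in S$ with $\tilde x\in\mathcal A_k$ and $\tilde x\in\mathcal B[\mathcal M_j[\tilde w_i,S]]$ for some component $\mathcal M_j[\tilde w_i,S]$ of $\mathcal M[\tilde w_i,S]$, then $\mathcal M_j[\tilde w_i,S]\subset\mathcal A_k$.
   Context: $\mathcal D^n(\delta)=\{\delta m:m\in\mathbb Z^n\}$ for fixed $\delta>0$; $\mathbb N=\{1,2,\dots\}$. A DIFS $\{S;\tilde w_1,\dots,\tilde w_N;p_1,\dots,p_N\}$ consists of $S\subset\mathcal D^n(\delta)$, maps $\tilde w_i:S\to S$, and functions $p_i:S\to(0,1]$ with $\sum_ip_i(\tilde x)=1$ for every $\tilde x\in S$; its associated Markov chain on $S$ has transition probabilities $P(\tilde x,\tilde y)=\sum_ip_i(\tilde x)\mathbf 1_{\{\tilde y\}}(\tilde w_i(\tilde x))$. Accessibility: $P^k(\tilde x,\tilde y)>0$ for some $k\ge1$; a communication class is a maximal nonempty set of mutually accessible states; a state is recurrent if the chain started there returns to it in finitely many steps a.s.; a recurrent communication class is a communication class of recurrent states. Absorbing sets: for a map $\tilde w$ and nonempty $C$ with $\tilde w(C)\subset C$, a set $\Lambda\subset C$ is absorbing for $\tilde w$ in $C$ if for each $\tilde x\in C$ there is $N$ with $\tilde w^{\circ i}(\tilde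 x)\in\Lambda$ for all $i\ge N$. If the intersection of all absorbing sets for $\tilde w$ in $C$ is itself absorbing in $C$, it is the minimal absorbing set $\mathcal M[\tilde w,C]$ (and it is said to exist). Its components are the equivalence classes of the relation $\tilde x\sim\tilde y\iff\tilde w^{\circ j}(\tilde x)=\tilde w^{\circ l}(\tilde y)$ for some $j,l\in\mathbb N$; the basin of a component $\mathcal M_j$ is $\mathcal B[\mathcal M_j]=\{\tilde x\in C:\exists i\in\mathbb N,\ \tilde w^{\circ i}(\tilde x)\in\mathcal M_j\}$. *)

theory Defs
  imports "HOL-Analysis.Analysis"
begin

definition lattice :: "real \<Rightarrow> (real^'n) set" where
  "lattice \<delta> = {x. \<exists>m::int^'n. x = \<delta> *\<^sub>R (\<chi> i. real_of_int (m $ i))}"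

definition is_DIFS ::
  "real \<Rightarrow> (real^'n) set \<Rightarrow> nat \<Rightarrow> (nat \<Rightarrow> real^'n \<Rightarrow> real^'n) \<Rightarrow> (nat \<Rightarrow> real^'n \<Rightarrow> real) \<Rightarrow> bool" where
  "is_DIFS \<delta> S N w p \<longleftrightarrow> \<delta> > 0 \<and> N \<ge> 1 \<and> S \<subseteq> lattice \<delta> \<and>
     (\<forall>i<N. w i ` S \<subseteq> S) \<and>
     (\<forall>i<N. \<forall>x\<in>S. 0 < p i x \<and> p i x \<le> 1) \<and>
     (\<forall>x\<in>S. (\<Sum>i<N. p i x) = 1)"

definition trans_prob :: "nat \<Rightarrow> (nat \<Rightarrow> 'a \<Rightarrow> 'a) \<Rightarrow> (nat \<Rightarrow> 'a \<Rightarrow> real) \<Rightarrow> 'a \<Rightarrow> 'a \<Rightarrow> real" where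
  "trans_prob N w p x y = (\<Sum>i<N. p i x * (if w i x = y then 1 else 0))"

text \<open>k-step transition probabilities; P^(k+1)(x,y) = sum_z P(x,z) P^k(z,y),
  where the sum over z reduces to the finitely many images w_i x.\<close>
fun trans_pow :: "nat \<Rightarrow> (nat \<Rightarrow> 'a \<Rightarrow> 'a) \<Rightarrow> (nat \<Rightarrow> 'a \<Rightarrow> real) \<Rightarrow> nat \<Rightarrow> 'a \<Rightarrow> 'a \<Rightarrow> real" where
  "trans_pow N w p 0 x y = (if x = y then 1 else 0)"
| "trans_pow N w p (Suc k) x y = (\<Sum>i<N. p i x * trans_pow N w p k (w i x) y)"

definition accessible :: "nat \<Rightarrow> (nat \<Rightarrow> 'a \<Rightarrow> 'a) \<Rightarrow> (nat \<Rightarrow> 'a \<Rightarrow> real) \<Rightarrow> 'a \<Rightarrow> 'a \<Rightarrow> bool" where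
  "accessible N w p x y \<longleftrightarrow> (\<exists>k\<ge>1. trans_pow N w p k x y > 0)"

definition mutually_accessible_set ::
  "nat \<Rightarrow> (nat \<Rightarrow> 'a \<Rightarrow> 'a) \<Rightarrow> (nat \<Rightarrow> 'a \<Rightarrow> real) \<Rightarrow> 'a set \<Rightarrow> bool" where
  "mutually_accessible_set N w p C \<longleftrightarrow>
     (\<forall>x\<in>C. \<forall>y\<in>C. x \<noteq> y \<longrightarrow> accessible N w p x y \<and> accessible N w p y x)"

definition comm_class ::
  "'a set \<Rightarrow> nat \<Rightarrow> (nat \<Rightarrow> 'a \<Rightarrow> 'a) \<Rightarrow> (nat \<Rightarrow> 'a \<Rightarrow> real) \<Rightarrow> 'a set \<Rightarrow> bool" where
  "comm_class S N w p C \<longleftrightarrow> C \<noteq> {} \<and> C \<subseteq> S \<and> mutually_accessible_set N w p C \<and>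
     (\<forall>D. C \<subseteq> D \<and> D \<subseteq> S \<and> mutually_accessible_set N w p D \<longrightarrow> D = C)"

fun first_passage :: "nat \<Rightarrow> (nat \<Rightarrow> 'a \<Rightarrow> 'a) \<Rightarrow> (nat \<Rightarrow> 'a \<Rightarrow> real) \<Rightarrow> nat \<Rightarrow> 'a \<Rightarrow> 'a \<Rightarrow> real" where
  "first_passage N w p 0 x y = 0"
| "first_passage N w p (Suc 0) x y = trans_prob N w p x y"
| "first_passage N w p (Suc (Suc n)) x y =
     (\<Sum>i<N. p i x * (if w i x = y then 0 else first_passage N w p (Suc n) (w i x) y))"

definition recurrent :: "nat \<Rightarrow> (nat \<Rightarrow> 'a \<Rightarrow> 'a) \<Rightarrow> (nat \<Rightarrow> 'a \<Rightarrow> real) \<Rightarrow> 'a \<Rightarrow> bool" where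
  "recurrent N w p x \<longleftrightarrow> (\<Sum>n. first_passage N w p n x x) = 1"

definition recurrent_comm_class ::
  "'a set \<Rightarrow> nat \<Rightarrow> (nat \<Rightarrow> 'a \<Rightarrow> 'a) \<Rightarrow> (nat \<Rightarrow> 'a \<Rightarrow> real) \<Rightarrow> 'a set \<Rightarrow> bool" where
  "recurrent_comm_class S N w p C \<longleftrightarrow> comm_class S N w p C \<and> (\<forall>x\<in>C. recurrent N w p x)"

definition absorbing :: "('a \<Rightarrow> 'a) \<Rightarrow> 'a set \<Rightarrow> 'a set \<Rightarrow> bool" where
  "absorbing f C \<Lambda> \<longleftrightarrow> \<Lambda> \<subseteq> C \<and> (\<forall>x\<in>C. \<exists>N. \<forall>i\<ge>N. (f ^^ i) x \<in> \<Lambda>)"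

definition min_absorbing :: "('a \<Rightarrow> 'a) \<Rightarrow> 'a set \<Rightarrow> 'a set" where
  "min_absorbing f C = \<Inter>{\<Lambda>. absorbing f C \<Lambda>}"

definition min_absorbing_exists :: "('a \<Rightarrow> 'a) \<Rightarrow> 'a set \<Rightarrow> bool" where
  "min_absorbing_exists f C \<longleftrightarrow> C \<noteq> {} \<and> f ` C \<subseteq> C \<and> absorbing f C (min_absorbing f C)"

definition orbit_rel :: "('a \<Rightarrow> 'a) \<Rightarrow> 'a \<Rightarrow> 'a \<Rightarrow> bool" where
  "orbit_rel f x y \<longleftrightarrow> (\<exists>j\<ge>1. \<exists>l\<ge>1. (f ^^ j) x = (f ^^ l) y)"

definition absorbing_components :: "('a \<Rightarrow> 'a) \<Rightarrow> 'a set \<Rightarrow> 'a set set" where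
  "absorbing_components f C = (\<lambda>x. {y \<in> min_absorbing f C. orbit_rel f x y}) ` min_absorbing f C"

definition basin :: "('a \<Rightarrow> 'a) \<Rightarrow> 'a set \<Rightarrow> 'a set \<Rightarrow> 'a set" where
  "basin f C M = {x \<in> C. \<exists>i\<ge>1. (f ^^ i) x \<in> M}"

end

theory Submission
  imports Defs
begin

lemma funpow_split: "(f ^^ (m + n)) x = (f ^^ m) ((f ^^ n) x)"
  by (simp add: funpow_add)

lemma min_abs_periodic:
  assumes ex: "min_absorbing_exists f C" and zM: "z \<in> min_absorbing f C"
  shows "\<exists>q\<ge>1. (f ^^ q) z = z"
proof (rule ccontr)
  assume np: "\<not> (\<exists>q\<ge>1. (f ^^ q) z = z)"
  let ?M = "min_absorbing f C"
  have abs: "absorbing f C ?M" using ex by (simp add: min_absorbing_exists_def)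
  have "absorbing f C (?M - {z})"
    unfolding absorbing_def
  proof (intro conjI ballI)
    show "?M - {z} \<subseteq> C" using abs by (auto simp: absorbing_def)
  next
    fix y assume yC: "y \<in> C"
    obtain N0 where N0: "\<forall>i\<ge>N0. (f ^^ i) y \<in> ?M" using abs yC by (auto simp: absorbing_def)
    show "\<exists>N. \<forall>i\<ge>N. (f ^^ i) y \<in> ?M - {z}"
    proof (cases "\<exists>a. (f ^^ a) y = z")
      case True
      then obtain a where a: "(f ^^ a) y = z" by blast
      show ?thesis
      proof (intro exI allI impI)
        fix i assume i: "max N0 (Suc a) \<le> i"
        have "(f ^^ i) y \<noteq> z"
        proof
          assume h: "(f ^^ i) y = z"
          have "(f ^^ i) y = (f ^^ (i - a)) ((f ^^ a) y)"
            using i by (metis funpow_split le_add_diff_inverse2 max.bounded_iff Suc_leD)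
          with h a have "(f ^^ (i - a)) z = z" by simp
          moreover have "i - a \<ge> 1" using i by linarith
          ultimately show False using np by blast
        qed
        then show "(f ^^ i) y \<in> ?M - {z}" using N0 i by simp
      qed
    next
      case False
      then show ?thesis using N0 by blast
    qed
  qed
  then have "?M \<subseteq> ?M - {z}" by (auto simp: min_absorbing_def)
  then show False using zM by blast
qed

lemma orbit_reach:
  assumes q: "q \<ge> 1" "(f ^^ q) z = z"
    and h1: "(f ^^ a) c = (f ^^ b) z" and h2: "(f ^^ a') c = (f ^^ b') y"
  shows "\<exists>m. z = (f ^^ m) y"
proof -
  have per: "(f ^^ (n * q)) z = z" for n
  proof (induction n)
    case 0 then show ?case by simp
  next
    case (Suc n)
    have "(f ^^ (Suc n * q)) z = (f ^^ q) ((f ^^ (n * q)) z)"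
      by (metis funpow_split mult_Suc)
    then show ?case using Suc q by simp
  qed
  define n where "n = a' + b"
  have "n \<le> n * q" using q by simp
  then obtain r where r: "n * q = r + a' + b" unfolding n_def
    by (metis add.assoc le_add_diff_inverse2)
  have "z = (f ^^ (r + a' + b)) z" using per[of n] r by simp
  also have "\<dots> = (f ^^ r) ((f ^^ a') ((f ^^ b) z))" by (simp add: funpow_split)
  also have "\<dots> = (f ^^ r) ((f ^^ a') ((f ^^ a) c))" using h1 by simp
  also have "(f ^^ a') ((f ^^ a) c) = (f ^^ a) ((f ^^ a') c)"
    by (metis funpow_split add.commute)
  also have "\<dots> = (f ^^ a) ((f ^^ b') y)" using h2 by simp
  also have "(f ^^ r) ((f ^^ a) ((f ^^ b') y)) = (f ^^ (r + a + b')) y" by (simp add: funpow_split)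
  finally show ?thesis by blast
qed

locale dsys =
  fixes S :: "'a set" and N :: nat and w :: "nat \<Rightarrow> 'a \<Rightarrow> 'a" and p :: "nat \<Rightarrow> 'a \<Rightarrow> real"
  assumes wS: "\<And>l u. l < N \<Longrightarrow> u \<in> S \<Longrightarrow> w l u \<in> S"
    and ppos: "\<And>l u. l < N \<Longrightarrow> u \<in> S \<Longrightarrow> 0 < p l u"
    and psum: "\<And>u. u \<in> S \<Longrightarrow> (\<Sum>l<N. p l u) = 1"
begin

lemma p_le1: "l < N \<Longrightarrow> u \<in> S \<Longrightarrow> p l u \<le> 1"
  using member_le_sum[of l "{..<N}" "\<lambda>l. p l u"] ppos psum by fastforce

lemma iter_S: "l < N \<Longrightarrow> u \<in> S \<Longrightarrow> (w l ^^ k) u \<in> S"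
  by (induction k) (auto simp: wS)

lemma tp_nonneg: "u \<in> S \<Longrightarrow> 0 \<le> trans_pow N w p k u y"
proof (induction k arbitrary: u)
  case 0 then show ?case by simp
next
  case (Suc k)
  have "0 \<le> p l u * trans_pow N w p k (w l u) y" if "l \<in> {..<N}" for l
    using ppos[of l u] Suc.IH[OF wS[of l u]] Suc.prems that by simp
  then show ?case unfolding trans_pow.simps by (rule sum_nonneg)
qed

lemma tp_step:
  assumes l: "l < N" and u: "u \<in> S"
  shows "p l u * trans_pow N w p k (w l u) y \<le> trans_pow N w p (Suc k) u y"
proof -
  have nn: "0 \<le> p l' u * trans_pow N w p k (w l' u) y" if "l' \<in> {..<N} - {l}" for l'
  proof -
    have "l' < N" using that by simp
    then have "0 < p l' u" "0 \<le> trans_pow N w p k (w l' u) y"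
      using ppos[of l' u] tp_nonneg[OF wS[of l' u]] u by auto
    then show ?thesis by simp
  qed
  have "p l u * trans_pow N w p k (w l u) y \<le> (\<Sum>l<N. p l u * trans_pow N w p k (w l u) y)"
    by (rule member_le_sum) (use l nn in auto)
  then show ?thesis by simp
qed

lemma tp_path: "l < N \<Longrightarrow> u \<in> S \<Longrightarrow> 0 < trans_pow N w p k u ((w l ^^ k) u)"
proof (induction k arbitrary: u)
  case 0 then show ?case by simp
next
  case (Suc k)
  have e: "(w l ^^ Suc k) u = (w l ^^ k) (w l u)" by (metis funpow_Suc_right comp_apply)
  have "0 < p l u * trans_pow N w p k (w l u) ((w l ^^ k) (w l u))"
    using Suc ppos wS by simp
  also have "\<dots> \<le> trans_pow N w p (Suc k) u ((w l ^^ k) (w l u))" using tp_step Suc by blast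
  finally show ?case using e by simp
qed

lemma tp_trans: "u \<in> S \<Longrightarrow> v \<in> S \<Longrightarrow>
   trans_pow N w p k u v * trans_pow N w p m v y \<le> trans_pow N w p (k + m) u y"
proof (induction k arbitrary: u)
  case 0 then show ?case using tp_nonneg by simp
next
  case (Suc k)
  have "trans_pow N w p (Suc k) u v * trans_pow N w p m v y
      = (\<Sum>l<N. p l u * (trans_pow N w p k (w l u) v * trans_pow N w p m v y))"
    by (simp add: sum_distrib_right mult.assoc)
  also have "\<dots> \<le> (\<Sum>l<N. p l u * trans_pow N w p (k + m) (w l u) y)"
  proof (rule sum_mono)
    fix l assume l: "l \<in> {..<N}"
    show "p l u * (trans_pow N w p k (w l u) v * trans_pow N w p m v y) \<le> p l u * trans_pow N w p (k + m) (w l u) y"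
      using Suc.IH[OF wS[of l u]] Suc.prems ppos[of l u] l by (simp add: mult_left_mono)
  qed
  also have "\<dots> = trans_pow N w p (Suc k + m) u y" by simp
  finally show ?case .
qed

lemma acc_trans: "accessible N w p a b \<Longrightarrow> accessible N w p b c \<Longrightarrow> a \<in> S \<Longrightarrow> b \<in> S
   \<Longrightarrow> accessible N w p a c"
  unfolding accessible_def
proof (elim exE conjE)
  fix k m assume k: "1 \<le> k" "0 < trans_pow N w p k a b" and m: "1 \<le> m" "0 < trans_pow N w p m b c"
  assume "a \<in> S" "b \<in> S"
  then have "trans_pow N w p k a b * trans_pow N w p m b c \<le> trans_pow N w p (k + m) a c"
    by (rule tp_trans)
  moreover have "0 < trans_pow N w p k a b * trans_pow N w p m b c" using k m by simp
  ultimately show "\<exists>k\<ge>1. 0 < trans_pow N w p k a c" using k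
    by (intro exI[of _ "k + m"]) auto
qed

definition H :: "nat \<Rightarrow> 'a \<Rightarrow> 'a \<Rightarrow> real" where
  "H n u x = (\<Sum>m<n. first_passage N w p m u x)"

lemma fp_nonneg_Suc: "u \<in> S \<Longrightarrow> 0 \<le> first_passage N w p (Suc n) u x"
proof (induction n arbitrary: u)
  case 0
  have "0 \<le> p l u * (if w l u = x then 1 else 0)" if "l \<in> {..<N}" for l
    using ppos[of l u] 0 that by simp
  then show ?case unfolding trans_prob_def first_passage.simps by (rule sum_nonneg)
next
  case (Suc n)
  have "0 \<le> p l u * (if w l u = x then 0 else first_passage N w p (Suc n) (w l u) x)" if "l \<in> {..<N}" for l
    using ppos[of l u] Suc.IH[OF wS[of l u]] Suc.prems that by simp
  then show ?case unfolding first_passage.simps by (rule sum_nonneg)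
qed

lemma fp_nonneg: "u \<in> S \<Longrightarrow> 0 \<le> first_passage N w p n u x"
  using fp_nonneg_Suc by (cases n) auto

lemma H1: "H (Suc 0) u x = 0" by (simp add: H_def)
lemma H0: "H 0 u x = 0" by (simp add: H_def)

lemma H_Suc: "H (Suc n) u x = H n u x + first_passage N w p n u x"
  by (simp add: H_def)

lemma H_rec: "H (Suc (Suc n)) u x = (\<Sum>l<N. p l u * (if w l u = x then 1 else H (Suc n) (w l u) x))"
proof (induction n arbitrary: u)
  case 0
  have "H (Suc (Suc 0)) u x = trans_prob N w p u x"
    by (simp only: H_Suc[of "Suc 0"] H1 first_passage.simps)
  also have "\<dots> = (\<Sum>l<N. p l u * (if w l u = x then 1 else H (Suc 0) (w l u) x))"
    unfolding trans_prob_def by (rule sum.cong) (auto simp: H1)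
  finally show ?case .
next
  case (Suc n)
  have "H (Suc (Suc (Suc n))) u x = H (Suc (Suc n)) u x + first_passage N w p (Suc (Suc n)) u x"
    by (rule H_Suc)
  also have "\<dots> = (\<Sum>l<N. p l u * (if w l u = x then 1 else H (Suc n) (w l u) x)
      + p l u * (if w l u = x then 0 else first_passage N w p (Suc n) (w l u) x))"
    by (simp only: Suc.IH first_passage.simps(3) sum.distrib)
  also have "\<dots> = (\<Sum>l<N. p l u * (if w l u = x then 1 else H (Suc (Suc n)) (w l u) x))"
  proof (rule sum.cong)
    fix l
    show "p l u * (if w l u = x then 1 else H (Suc n) (w l u) x)
      + p l u * (if w l u = x then 0 else first_passage N w p (Suc n) (w l u) x) =
      p l u * (if w l u = x then 1 else H (Suc (Suc n)) (w l u) x)"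
      by (cases "w l u = x") (simp_all add: H_Suc[of "Suc n"] distrib_left)
  qed simp
  finally show ?case .
qed

lemma H_le1: "u \<in> S \<Longrightarrow> H n u x \<le> 1"
proof (induction n arbitrary: u rule: nat_less_induct)
  case (1 n u)
  show ?case
  proof (cases n)
    case 0 then show ?thesis by (simp add: H0)
  next
    case (Suc n')
    show ?thesis
    proof (cases n')
      case 0 then show ?thesis using Suc by (simp add: H1)
    next
      case (Suc n'')
      have "H n u x = (\<Sum>l<N. p l u * (if w l u = x then 1 else H (Suc n'') (w l u) x))"
        using Suc \<open>n = Suc n'\<close> by (simp add: H_rec)
      also have "\<dots> \<le> (\<Sum>l<N. p l u * 1)"
      proof (rule sum_mono)
        fix l assume l: "l \<in> {..<N}"
        have "Suc n'' < n" using Suc \<open>n = Suc n'\<close> by simp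
        then have "H (Suc n'') (w l u) x \<le> 1"
          using 1(1) wS[of l u] l 1(2) by blast
        then have "(if w l u = x then 1 else H (Suc n'') (w l u) x) \<le> 1" by simp
        moreover have "0 \<le> p l u" using ppos[of l u] l 1(2) by simp
        ultimately show "p l u * (if w l u = x then 1 else H (Suc n'') (w l u) x) \<le> p l u * 1"
          by (rule mult_left_mono)
      qed
      also have "\<dots> = 1" using psum[OF 1(2)] by simp
      finally show ?thesis .
    qed
  qed
qed

lemma H_zero: "u \<in> S \<Longrightarrow> \<not> accessible N w p u x \<Longrightarrow> H n u x = 0"
proof (induction n arbitrary: u rule: nat_less_induct)
  case (1 n u)
  show ?case
  proof (cases n)
    case 0 then show ?thesis by (simp add: H0)
  next
    case (Suc n')
    show ?thesis
    proof (cases n')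
      case 0 then show ?thesis using Suc by (simp add: H1)
    next
      case (Suc n'')
      have "H n u x = (\<Sum>l<N. p l u * (if w l u = x then 1 else H (Suc n'') (w l u) x))"
        using Suc \<open>n = Suc n'\<close> by (simp add: H_rec)
      also have "\<dots> = (\<Sum>l<N. 0)"
      proof (rule sum.cong)
        fix l assume l: "l \<in> {..<N}"
        have nx: "w l u \<noteq> x"
        proof
          assume e: "w l u = x"
          have "p l u * trans_pow N w p 0 (w l u) x \<le> trans_pow N w p (Suc 0) u x"
            using tp_step l 1 by blast
          moreover have "trans_pow N w p 0 (w l u) x = 1" using e by simp
          moreover have "0 < p l u" using ppos l 1 by simp
          ultimately have "0 < trans_pow N w p (Suc 0) u x"
            by (metis mult.right_neutral order_less_le_trans)
          then show False using 1 by (auto simp: accessible_def)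
        qed
        have na: "\<not> accessible N w p (w l u) x"
        proof
          assume "accessible N w p (w l u) x"
          then obtain k where k: "k \<ge> 1" "0 < trans_pow N w p k (w l u) x"
            by (auto simp: accessible_def)
          have "p l u * trans_pow N w p k (w l u) x \<le> trans_pow N w p (Suc k) u x"
            using tp_step l 1 by blast
          moreover have "0 < p l u * trans_pow N w p k (w l u) x"
            using k ppos[of l u] l 1 by simp
          ultimately have "0 < trans_pow N w p (Suc k) u x" by linarith
          then show False using 1 by (auto simp: accessible_def)
        qed
        show "p l u * (if w l u = x then 1 else H (Suc n'') (w l u) x) = 0"
        proof -
          have "Suc n'' < n" using Suc \<open>n = Suc n'\<close> by simp
          then have "H (Suc n'') (w l u) x = 0"
            using 1(1) wS[of l u] l 1(2) na by blast
          then show ?thesis using nx by simp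
        qed
      qed simp
      finally show ?thesis by simp
    qed
  qed
qed

lemma path_bound:
  assumes zS: "z \<in> S" and na: "\<not> accessible N w p z x" and i: "i < N"
  shows "u \<in> S \<Longrightarrow> (w i ^^ m) u = z \<Longrightarrow> (\<forall>j. 1 \<le> j \<longrightarrow> j \<le> m \<longrightarrow> (w i ^^ j) u \<noteq> x)
    \<Longrightarrow> H n u x \<le> 1 - (\<Prod>j<m. p i ((w i ^^ j) u))"
proof (induction m arbitrary: u n)
  case 0 then show ?case using H_zero zS na by simp
next
  case (Suc m)
  let ?P = "\<lambda>m u. (\<Prod>j<m. p i ((w i ^^ j) u))"
  have pp: "0 \<le> p i ((w i ^^ k) v) \<and> p i ((w i ^^ k) v) \<le> 1" if "v \<in> S" for k v
    using ppos[OF i iter_S[OF i that]] p_le1[OF i iter_S[OF i that]] by (simp add: order_less_imp_le)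
  have Pl1: "?P k v \<le> 1" if "v \<in> S" for k v
    using pp[OF that] by (simp add: prod_le_1)
  have Pnn: "0 \<le> ?P k v" if "v \<in> S" for k v
    using pp[OF that] by (simp add: prod_nonneg)
  have Ps: "?P (Suc m) u = p i u * ?P m (w i u)"
    by (subst prod.lessThan_Suc_shift) (simp add: funpow_Suc_right del: funpow.simps)
  have wu: "w i u \<in> S" using wS[OF i Suc.prems(1)] .
  have wux: "w i u \<noteq> x" using Suc.prems(3)[rule_format, of 1] by simp
  have IH: "H k (w i u) x \<le> 1 - ?P m (w i u)" for k
  proof (rule Suc.IH[OF wu])
    show "(w i ^^ m) (w i u) = z" using Suc.prems(2) by (simp add: funpow_Suc_right del: funpow.simps)
    show "\<forall>j. 1 \<le> j \<longrightarrow> j \<le> m \<longrightarrow> (w i ^^ j) (w i u) \<noteq> x"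
    proof (intro allI impI)
      fix j assume "1 \<le> j" "j \<le> m"
      then have "(w i ^^ Suc j) u \<noteq> x" using Suc.prems(3)[rule_format, of "Suc j"] by (simp del: funpow.simps)
      then show "(w i ^^ j) (w i u) \<noteq> x" by (simp add: funpow_Suc_right del: funpow.simps)
    qed
  qed
  show ?case
  proof (cases n)
    case 0 then show ?thesis using Pl1[OF Suc.prems(1), of "Suc m"] by (simp add: H0)
  next
    case (Suc n')
    show ?thesis
    proof (cases n')
      case 0 then show ?thesis using Suc Pl1[OF Suc.prems(1), of "Suc m"] by (simp add: H1)
    next
      case (Suc n'')
      let ?c = "p i u * ?P m (w i u)"
      have "H n u x = (\<Sum>l<N. p l u * (if w l u = x then 1 else H (Suc n'') (w l u) x))"
        using Suc \<open>n = Suc n'\<close> by (simp add: H_rec)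
      also have "\<dots> \<le> (\<Sum>l<N. p l u - (if l = i then ?c else 0))"
      proof (rule sum_mono)
        fix l assume l: "l \<in> {..<N}"
        show "p l u * (if w l u = x then 1 else H (Suc n'') (w l u) x) \<le> p l u - (if l = i then ?c else 0)"
        proof (cases "l = i")
          case True
          have "p i u * H (Suc n'') (w i u) x \<le> p i u * (1 - ?P m (w i u))"
            using IH[of "Suc n''"] ppos[OF i Suc.prems(1)] by (intro mult_left_mono) auto
          then show ?thesis using True wux by (simp add: algebra_simps)
        next
          case False
          have "p l u * (if w l u = x then 1 else H (Suc n'') (w l u) x) \<le> p l u * 1"
          proof (intro mult_left_mono)
            show "(if w l u = x then 1 else H (Suc n'') (w l u) x) \<le> 1"
              using H_le1[OF wS[of l u]] l Suc.prems(1) by auto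
            show "0 \<le> p l u" using ppos[of l u] l Suc.prems(1) by simp
          qed
          then show ?thesis using False by simp
        qed
      qed
      also have "\<dots> = (\<Sum>l<N. p l u) - (\<Sum>l<N. (if l = i then ?c else 0))"
        by (rule sum_subtractf)
      also have "\<dots> = 1 - ?c"
        using psum[OF Suc.prems(1)] i by simp
      finally show ?thesis using Ps by simp
    qed
  qed
qed

lemma path_exists:
  assumes "(f ^^ K) x = z" "z \<noteq> x"
  shows "\<exists>K'\<ge>1. (f ^^ K') x = z \<and> (\<forall>j. 1 \<le> j \<longrightarrow> j \<le> K' \<longrightarrow> (f ^^ j) x \<noteq> x)"
  using assms
proof (induction K rule: less_induct)
  case (less K)
  have K1: "K \<ge> 1" using less.prems by (cases K) auto
  show ?case
  proof (cases "\<forall>j. 1 \<le> j \<longrightarrow> j \<le> K \<longrightarrow> (f ^^ j) x \<noteq> x")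
    case True then show ?thesis using K1 less.prems by blast
  next
    case False
    then obtain j where j: "1 \<le> j" "j \<le> K" "(f ^^ j) x = x" by blast
    have "j \<noteq> K" using j less.prems by auto
    then have jK: "j < K" using j by simp
    have "(f ^^ (K - j)) x = (f ^^ (K - j)) ((f ^^ j) x)" using j by simp
    also have "\<dots> = (f ^^ K) x" using jK by (metis funpow_split le_add_diff_inverse2 less_imp_le)
    finally have "(f ^^ (K - j)) x = z" using less.prems by simp
    then show ?thesis using less.IH[of "K - j"] jK j less.prems by simp
  qed
qed

lemma recurrent_back:
  assumes xS: "x \<in> S" and zS: "z \<in> S" and i: "i < N" and zx: "z \<noteq> x"
    and K: "(w i ^^ K) x = z" and rec: "recurrent N w p x"
  shows "accessible N w p z x"
proof (rule ccontr)
  assume na: "\<not> accessible N w p z x"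
  obtain K' where K': "K' \<ge> 1" "(w i ^^ K') x = z" "\<forall>j. 1 \<le> j \<longrightarrow> j \<le> K' \<longrightarrow> (w i ^^ j) x \<noteq> x"
    using path_exists[OF K zx] by blast
  define d where "d = (\<Prod>j<K'. p i ((w i ^^ j) x))"
  have dpos: "0 < d" unfolding d_def using i iter_S xS ppos by (auto intro!: prod_pos)
  have bnd: "(\<Sum>m<n. first_passage N w p m x x) \<le> 1 - d" for n
    using path_bound[OF zS na i xS K'(2) K'(3), of n] by (simp add: H_def d_def)
  have sm: "summable (\<lambda>m. first_passage N w p m x x)"
    by (rule summableI_nonneg_bounded[where x = "1 - d"]) (use fp_nonneg xS bnd in auto)
  have "(\<Sum>m. first_passage N w p m x x) \<le> 1 - d" by (rule suminf_le_const[OF sm bnd])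
  then show False using rec dpos by (simp add: recurrent_def)
qed

end

theorem lemma5:
  fixes \<delta> :: real and S :: "(real^'n) set" and N :: nat
    and w :: "nat \<Rightarrow> real^'n \<Rightarrow> real^'n" and p :: "nat \<Rightarrow> real^'n \<Rightarrow> real"
    and i :: nat and A Mj :: "(real^'n) set" and x :: "real^'n"
  assumes "is_DIFS \<delta> S N w p"
    and "i < N"
    and "min_absorbing_exists (w i) S"
    and "recurrent_comm_class S N w p A"
    and "Mj \<in> absorbing_components (w i) S"
    and "x \<in> S" and "x \<in> A" and "x \<in> basin (w i) S Mj"
  shows "Mj \<subseteq> A"
proof
  interpret dsys S N w p using assms(1) by unfold_locales (auto simp: is_DIFS_def)
  let ?f = "w i"
  let ?M = "min_absorbing ?f S"
  have absM: "absorbing ?f S ?M" using assms(3) by (simp add: min_absorbing_exists_def)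
  then have MS: "?M \<subseteq> S" by (simp add: absorbing_def)
  obtain c where c: "c \<in> ?M" and Mj: "Mj = {y \<in> ?M. orbit_rel ?f c y}"
    using assms(5) by (auto simp: absorbing_components_def)
  obtain i0 where i0: "i0 \<ge> 1" "(?f ^^ i0) x \<in> Mj" using assms(8) by (auto simp: basin_def)
  fix z assume zMj: "z \<in> Mj"
  have zM: "z \<in> ?M" and ocz: "orbit_rel ?f c z" using zMj Mj by auto
  have ocy: "orbit_rel ?f c ((?f ^^ i0) x)" using i0 Mj by auto
  obtain q where q: "q \<ge> 1" "(?f ^^ q) z = z" using min_abs_periodic[OF assms(3) zM] by blast
  obtain a b where ab: "(?f ^^ a) c = (?f ^^ b) z" using ocz by (auto simp: orbit_rel_def)
  obtain a' b' where ab': "(?f ^^ a') c = (?f ^^ b') ((?f ^^ i0) x)" using ocy by (auto simp: orbit_rel_def)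
  obtain m where m: "z = (?f ^^ m) ((?f ^^ i0) x)" using orbit_reach[OF q ab ab'] by blast
  have K: "(?f ^^ (m + i0)) x = z" using m by (simp add: funpow_split)
  have zS: "z \<in> S" using zM MS by blast
  have A: "comm_class S N w p A" "\<forall>y\<in>A. recurrent N w p y"
    using assms(4) by (auto simp: recurrent_comm_class_def)
  have AS: "A \<subseteq> S" using A by (simp add: comm_class_def)
  have mA: "mutually_accessible_set N w p A" using A by (simp add: comm_class_def)
  show "z \<in> A"
  proof (cases "z = x")
    case True then show ?thesis using assms(7) by simp
  next
    case False
    have xz: "accessible N w p x z"
      unfolding accessible_def using tp_path[OF assms(2) assms(6), of "m + i0"] K i0
      by (intro exI[of _ "m + i0"]) auto
    have zx: "accessible N w p z x"
      using recurrent_back[OF assms(6) zS assms(2) False K] A assms(7) by blast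
    have "mutually_accessible_set N w p (insert z A)"
      unfolding mutually_accessible_set_def
    proof (intro ballI impI)
      fix u v assume u: "u \<in> insert z A" and v: "v \<in> insert z A" and uv: "u \<noteq> v"
      have toz: "accessible N w p a z \<and> accessible N w p z a" if "a \<in> A" for a
      proof (cases "a = x")
        case True then show ?thesis using xz zx by simp
      next
        case False
        then have "accessible N w p a x" "accessible N w p x a" using mA that assms(7)
          by (auto simp: mutually_accessible_set_def)
        then show ?thesis using acc_trans xz zx that AS assms(6) zS by blast
      qed
      show "accessible N w p u v \<and> accessible N w p v u"
        using u v uv toz mA by (auto simp: mutually_accessible_set_def)
    qed
    then have "insert z A = A" using A(1) AS zS by (auto simp: comm_class_def)
    then show ?thesis by blast
  qed
qed

end
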